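(* Let $\mathcal{M}$ be a separable metric space, let $f:\mathcal{M}\to\mathcal{M}$ be a continuous bijection with continuous inverse, and let $\mathcal{X}\subseteq\mathcal{M}$ be forward invariant under $f$ and path connected. Consider $x_{k+1}=f(x_k)$ on $\mathcal{X}$ with set of $\omega$-limit sets $\mathcal{W}$ and set of $\alpha$-limit sets $\mathcal{A}$. Suppose: (T1) there exist a separable metric space $\mathcal{Z}$, a continuous bijection $g:\mathcal{Z}\to\mathcal{Z}$ with continuous inverse, and a continuous map $F:\mathcal{X}\to\mathcal{Z}$ with $F\circ f=g\circ F$ on $\mathcal{X}$, such that $z_{k+1}=g(z_k)$ and $z_{k+1}=g^{-1}(z_k)$ on $\mathcal{Z}$ both have closed basins; (T2) every trajectory in $\mathcal{X}$ is forward precompact or backward precompact in $\mathcal{X}$; (T3) $\mathcal{W}\cup\mathcal{A}$ is countable; (T4) for every $\Omega\in\mathcal{W}$ there is a trajectory forward precompact in $\mathcal{X}$ starting in $D^+_{\mathcal{X}}(\Omega)$, and for every $\Gamma\in\mathcal{A}$ there is a trajectory backward precompact in $\mathcal{X}$ starting in $D^-_{\mathcal{X}}(\Gamma)$. If moreover $F$ is one-to-one, then $\mathcal{W}\cup\mathcal{A}$ has exactly one element.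
   Context: Forward orbit of $\xi$: $\{f^k(\xi)\mid k\in\mathbb{N}\}$; backward orbit: $\{f^{-k}(\xi)\mid k\in\mathbb{N}\}$. A set $S\subseteq\mathcal{X}$ is precompact if its closure in $\mathcal{X}$ is compact; a trajectory through $\xi$ is forward (backward) precompact if its forward (backward) orbit is precompact. $\omega_{\mathcal{X}}(\xi)$ is the set of $x\in\mathcal{X}$ with $f^{k_j}(\xi)\to x$ for some $k_j\to\infty$; $\alpha_{\mathcal{X}}(\xi)$ likewise with $f^{-k_j}$. $\mathcal{W}=\{\omega_{\mathcal{X}}(\xi)\mid\xi\in\mathcal{X}\}$, $\mathcal{A}=\{\alpha_{\mathcal{X}}(\xi)\mid\xi\in\mathcal{X}\}$, $D^+_{\mathcal{X}}(\Omega)=\{\xi\in\mathcal{X}\mid\omega_{\mathcal{X}}(\xi)=\Omega\}$, $D^-_{\mathcal{X}}(\Gamma)=\{\xi\in\mathcal{X}\mid\alpha_{\mathcal{X}}(\xi)=\Gamma\}$. A system has closed basins if the domain of attraction of each of its $\omega$-limit sets is closed (for a time-reversed system: each domain of repulsion of each $\alpha$-limit set of the original system is closed). Same notions on $\mathcal{Z}$ for $g$. *)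

theory Defs
  imports "HOL-Analysis.Analysis"
begin

definition separable_space :: "'a::metric_space itself \<Rightarrow> bool" where
  "separable_space _ \<longleftrightarrow> (\<exists>D::'a set. countable D \<and> closure D = UNIV)"

definition fwd_orbit :: "('a \<Rightarrow> 'a) \<Rightarrow> 'a \<Rightarrow> 'a set" where
  "fwd_orbit f xi = {(f ^^ k) xi | k. True}"

definition bwd_orbit :: "('a \<Rightarrow> 'a) \<Rightarrow> 'a \<Rightarrow> 'a set" where
  "bwd_orbit f xi = {(inv f ^^ k) xi | k. True}"

definition precompact_in :: "'a::metric_space set \<Rightarrow> 'a set \<Rightarrow> bool" where
  "precompact_in X S \<longleftrightarrow> S \<subseteq> X \<and> compact (X \<inter> closure S)"

definition omega_limit :: "('a::metric_space \<Rightarrow> 'a) \<Rightarrow> 'a set \<Rightarrow> 'a \<Rightarrow> 'a set" where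
  "omega_limit f X xi = {x \<in> X. \<exists>k::nat \<Rightarrow> nat. filterlim k at_top sequentially \<and>
        (\<lambda>j. (f ^^ k j) xi) \<longlonglongrightarrow> x}"

definition alpha_limit :: "('a::metric_space \<Rightarrow> 'a) \<Rightarrow> 'a set \<Rightarrow> 'a \<Rightarrow> 'a set" where
  "alpha_limit f X xi = {x \<in> X. \<exists>k::nat \<Rightarrow> nat. filterlim k at_top sequentially \<and>
        (\<lambda>j. (inv f ^^ k j) xi) \<longlonglongrightarrow> x}"

definition omega_sets :: "('a::metric_space \<Rightarrow> 'a) \<Rightarrow> 'a set \<Rightarrow> 'a set set" where
  "omega_sets f X = {omega_limit f X xi | xi. xi \<in> X}"

definition alpha_sets :: "('a::metric_space \<Rightarrow> 'a) \<Rightarrow> 'a set \<Rightarrow> 'a set set" where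
  "alpha_sets f X = {alpha_limit f X xi | xi. xi \<in> X}"

definition dom_attr :: "('a::metric_space \<Rightarrow> 'a) \<Rightarrow> 'a set \<Rightarrow> 'a set \<Rightarrow> 'a set" where
  "dom_attr f X \<Omega> = {xi \<in> X. omega_limit f X xi = \<Omega>}"

definition dom_rep :: "('a::metric_space \<Rightarrow> 'a) \<Rightarrow> 'a set \<Rightarrow> 'a set \<Rightarrow> 'a set" where
  "dom_rep f X \<Gamma> = {xi \<in> X. alpha_limit f X xi = \<Gamma>}"

text \<open>Closed basins of the system x_{k+1} = f x_k on X (domain of attraction of every
  omega-limit set closed), and of the time-reversed system x_{k+1} = f^{-1} x_k
  (domain of repulsion of every alpha-limit set of f closed).\<close>
definition closed_basins :: "('a::metric_space \<Rightarrow> 'a) \<Rightarrow> 'a set \<Rightarrow> bool" where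
  "closed_basins f X \<longleftrightarrow> (\<forall>\<Omega> \<in> omega_sets f X. closed (dom_attr f X \<Omega>))"

definition closed_basins_rev :: "('a::metric_space \<Rightarrow> 'a) \<Rightarrow> 'a set \<Rightarrow> bool" where
  "closed_basins_rev f X \<longleftrightarrow> (\<forall>\<Gamma> \<in> alpha_sets f X. closed (dom_rep f X \<Gamma>))"

end

theory Submission
  imports Defs
begin


lemma fwd_orbit_mem: "(h^^n) \<xi> \<in> fwd_orbit h \<xi>"
  by (auto simp: fwd_orbit_def)

lemma fwd_orbit_sub:
  assumes "\<xi> \<in> S" "\<And>x. x \<in> S \<Longrightarrow> h x \<in> S"
  shows "fwd_orbit h \<xi> \<subseteq> S"
proof -
  have "(h^^n) \<xi> \<in> S" for n by (induction n) (auto simp: assms)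
  then show ?thesis by (auto simp: fwd_orbit_def)
qed

lemma om_sub_closure: "omega_limit h X \<xi> \<subseteq> closure (fwd_orbit h \<xi>)"
proof
  fix x assume "x \<in> omega_limit h X \<xi>"
  then obtain k where "(\<lambda>j. (h ^^ k j) \<xi>) \<longlonglongrightarrow> x" by (auto simp: omega_limit_def)
  then show "x \<in> closure (fwd_orbit h \<xi>)"
    unfolding closure_sequential by (intro exI[of _ "\<lambda>j. (h^^k j) \<xi>"]) (auto simp: fwd_orbit_mem)
qed

lemma om_char:
  assumes "x \<in> X"
  shows "x \<in> omega_limit h X \<xi> \<longleftrightarrow> (\<forall>e>0. \<forall>N. \<exists>k\<ge>N. dist ((h^^k) \<xi>) x < e)"
proof
  assume "x \<in> omega_limit h X \<xi>"
  then obtain k where k: "filterlim k at_top sequentially" "(\<lambda>j. (h ^^ k j) \<xi>) \<longlonglongrightarrow> x"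
    by (auto simp: omega_limit_def)
  show "\<forall>e>0. \<forall>N. \<exists>k\<ge>N. dist ((h^^k) \<xi>) x < e"
  proof (intro allI impI)
    fix e :: real and N assume "e > 0"
    have "eventually (\<lambda>j. N \<le> k j) sequentially" using k(1) by (simp add: filterlim_at_top)
    moreover have "eventually (\<lambda>j. dist ((h ^^ k j) \<xi>) x < e) sequentially"
      using k(2) \<open>e > 0\<close> by (simp add: tendsto_iff)
    ultimately have "eventually (\<lambda>j. N \<le> k j \<and> dist ((h ^^ k j) \<xi>) x < e) sequentially"
      by (rule eventually_conj)
    then obtain M where "\<forall>j\<ge>M. N \<le> k j \<and> dist ((h ^^ k j) \<xi>) x < e"
      unfolding eventually_sequentially by blast
    then have "N \<le> k M \<and> dist ((h ^^ k M) \<xi>) x < e" by blast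
    then show "\<exists>k\<ge>N. dist ((h^^k) \<xi>) x < e" by (intro exI[of _ "k M"]) simp
  qed
next
  assume H: "\<forall>e>0. \<forall>N. \<exists>k\<ge>N. dist ((h^^k) \<xi>) x < e"
  define kk where "kk n = (SOME k. k \<ge> n \<and> dist ((h^^k) \<xi>) x < 1 / Suc n)" for n
  have kk: "kk n \<ge> n \<and> dist ((h^^kk n) \<xi>) x < 1 / Suc n" for n
  proof -
    have "\<exists>k\<ge>n. dist ((h^^k) \<xi>) x < 1 / Suc n" using H by simp
    then have "\<exists>k. k \<ge> n \<and> dist ((h^^k) \<xi>) x < 1 / Suc n" by blast
    then show ?thesis unfolding kk_def by (rule someI_ex)
  qed
  have "filterlim kk at_top sequentially"
    unfolding filterlim_at_top
  proof
    fix Z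
    show "eventually (\<lambda>n. Z \<le> kk n) sequentially"
      unfolding eventually_sequentially using kk by (intro exI[of _ Z]) (meson order.trans)
  qed
  moreover have "(\<lambda>j. (h ^^ kk j) \<xi>) \<longlonglongrightarrow> x"
  proof (rule metric_LIMSEQ_I)
    fix r :: real assume "r > 0"
    then obtain no :: nat where "inverse (real (Suc no)) < r"
      using reals_Archimedean by blast
    then have no: "1 / Suc no < r" by (simp add: inverse_eq_divide)
    show "\<exists>no. \<forall>n\<ge>no. dist ((h ^^ kk n) \<xi>) x < r"
    proof (intro exI allI impI)
      fix n assume "n \<ge> no"
      then have "1 / real (Suc n) \<le> 1 / Suc no"
        by (intro divide_left_mono) auto
      then show "dist ((h ^^ kk n) \<xi>) x < r" using kk[of n] no by linarith
    qed
  qed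
  ultimately show "x \<in> omega_limit h X \<xi>" using assms by (auto simp: omega_limit_def)
qed

lemma om_closed:
  assumes "s \<longlonglongrightarrow> y" "\<And>n. s n \<in> omega_limit h X \<xi>" "y \<in> X"
  shows "y \<in> omega_limit h X \<xi>"
  unfolding om_char[OF assms(3)]
proof (intro allI impI)
  fix e :: real and N assume "e > 0"
  then have "e/2 > 0" by simp
  have "eventually (\<lambda>n. dist (s n) y < e/2) sequentially"
    using assms(1)[unfolded tendsto_iff, rule_format, OF \<open>e/2 > 0\<close>] .
  then obtain M where "\<forall>n\<ge>M. dist (s n) y < e/2" unfolding eventually_sequentially by blast
  then have n: "dist (s M) y < e/2" by blast
  have "s M \<in> X" using assms(2)[of M] by (auto simp: omega_limit_def)
  from om_char[OF this, of h \<xi>] assms(2)[of M]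
  have "\<forall>e>0. \<forall>N. \<exists>k\<ge>N. dist ((h^^k) \<xi>) (s M) < e" by blast
  then obtain k where k: "k \<ge> N" "dist ((h^^k) \<xi>) (s M) < e/2"
    using \<open>e/2 > 0\<close> by blast
  have "dist ((h^^k) \<xi>) y \<le> dist ((h^^k) \<xi>) (s M) + dist (s M) y" by (rule dist_triangle)
  then have "dist ((h^^k) \<xi>) y < e" using k n by linarith
  then show "\<exists>k\<ge>N. dist ((h^^k) \<xi>) y < e" using k by blast
qed

lemma om_sub_om:
  assumes "fwd_orbit h' x \<subseteq> omega_limit h X \<xi>"
  shows "omega_limit h' X x \<subseteq> omega_limit h X \<xi>"
proof
  fix y assume "y \<in> omega_limit h' X x"
  then obtain k where yk: "y \<in> X" "(\<lambda>j. (h' ^^ k j) x) \<longlonglongrightarrow> y" by (auto simp: omega_limit_def)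
  have "(h'^^k n) x \<in> omega_limit h X \<xi>" for n
    using assms fwd_orbit_mem[where h=h' and n="k n" and \<xi>=x] by (rule subsetD)
  then show "y \<in> omega_limit h X \<xi>" by (rule om_closed[OF yk(2) _ yk(1)])
qed

lemma filterlim_minus1:
  assumes "filterlim k at_top sequentially"
  shows "filterlim (\<lambda>j. k j - 1 :: nat) at_top sequentially"
  unfolding filterlim_at_top
proof
  fix Z :: nat
  have "eventually (\<lambda>j. Z + 1 \<le> k j) sequentially" using assms by (simp add: filterlim_at_top)
  then show "eventually (\<lambda>j. Z \<le> k j - 1) sequentially" by (rule eventually_mono) auto
qed

lemma shift1: "omega_limit h S (h z) = omega_limit h S z"
proof
  show "omega_limit h S (h z) \<subseteq> omega_limit h S z"
  proof
    fix x assume "x \<in> omega_limit h S (h z)"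
    then obtain k where k: "x \<in> S" "filterlim k at_top sequentially" "(\<lambda>j. (h ^^ k j) (h z)) \<longlonglongrightarrow> x"
      by (auto simp: omega_limit_def)
    have "filterlim (\<lambda>j. Suc (k j)) at_top sequentially"
      unfolding filterlim_at_top
    proof
      fix Z
      have "eventually (\<lambda>j. Z \<le> k j) sequentially" using k(2) by (simp add: filterlim_at_top)
      then show "eventually (\<lambda>j. Z \<le> Suc (k j)) sequentially" by (rule eventually_mono) auto
    qed
    moreover have "(\<lambda>j. (h ^^ Suc (k j)) z) \<longlonglongrightarrow> x" using k(3) by (simp add: funpow_Suc_right del: funpow.simps)
    ultimately show "x \<in> omega_limit h S z" using k(1) by (auto simp: omega_limit_def)
  qed
next
  show "omega_limit h S z \<subseteq> omega_limit h S (h z)"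
  proof
    fix x assume "x \<in> omega_limit h S z"
    then obtain k where k: "x \<in> S" "filterlim k at_top sequentially" "(\<lambda>j. (h ^^ k j) z) \<longlonglongrightarrow> x"
      by (auto simp: omega_limit_def)
    have ev: "eventually (\<lambda>j. 1 \<le> k j) sequentially" using k(2) by (simp add: filterlim_at_top)
    have "(\<lambda>j. (h ^^ (k j - 1)) (h z)) \<longlonglongrightarrow> x"
    proof (rule Lim_transform_eventually[OF k(3)])
      show "eventually (\<lambda>j. (h ^^ k j) z = (h ^^ (k j - 1)) (h z)) sequentially"
        using ev
      proof (rule eventually_mono)
        fix j assume "1 \<le> k j"
        then have "k j = Suc (k j - 1)" by simp
        then show "(h ^^ k j) z = (h ^^ (k j - 1)) (h z)"
          by (metis funpow_Suc_right o_apply)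
      qed
    qed
    then show "x \<in> omega_limit h S (h z)" using k(1) filterlim_minus1[OF k(2)]
      by (auto simp: omega_limit_def)
  qed
qed

lemma shiftn: "omega_limit h S ((h^^n) z) = omega_limit h S z"
  by (induction n) (auto simp: shift1)

lemma basin_stable:
  assumes "closed_basins G UNIV" "z' \<in> omega_limit G UNIV z"
  shows "omega_limit G UNIV z' = omega_limit G UNIV z"
proof -
  let ?S = "omega_limit G UNIV z"
  have "?S \<in> omega_sets G UNIV" by (auto simp: omega_sets_def)
  then have cl: "closed (dom_attr G UNIV ?S)" using assms(1) by (auto simp: closed_basins_def)
  obtain k where k: "(\<lambda>j. (G ^^ k j) z) \<longlonglongrightarrow> z'" using assms(2) by (auto simp: omega_limit_def)
  have "(G ^^ k j) z \<in> dom_attr G UNIV ?S" for j by (auto simp: dom_attr_def shiftn)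
  then have "z' \<in> dom_attr G UNIV ?S" using closed_sequentially[OF cl _ k] by blast
  then show ?thesis by (auto simp: dom_attr_def)
qed



lemma filterlim_Suc_comp:
  assumes "filterlim k at_top sequentially"
  shows "filterlim (\<lambda>j. Suc (k j)) at_top sequentially"
  unfolding filterlim_at_top
proof
  fix Z
  have "eventually (\<lambda>j. Z \<le> k j) sequentially" using assms by (simp add: filterlim_at_top)
  then show "eventually (\<lambda>j. Z \<le> Suc (k j)) sequentially" by (rule eventually_mono) auto
qed

locale sys =
  fixes h :: "'m::metric_space \<Rightarrow> 'm" and X :: "'m set"
    and G :: "'z::metric_space \<Rightarrow> 'z" and F :: "'m \<Rightarrow> 'z"
  assumes h_bij: "bij h" and h_cont: "continuous_on UNIV h" and hi_cont: "continuous_on UNIV (inv h)"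
    and F_cont: "continuous_on X F" and F_inj: "inj_on F X"
    and conj: "\<And>x. x \<in> X \<Longrightarrow> h x \<in> X \<Longrightarrow> F (h x) = G (F x)"
    and G_basins: "closed_basins G UNIV"
begin

lemma orbit_conj:
  assumes "\<xi> \<in> X" "fwd_orbit h \<xi> \<subseteq> X"
  shows "F ((h^^n) \<xi>) = (G^^n) (F \<xi>)"
proof (induction n)
  case 0 then show ?case by simp
next
  case (Suc n)
  have a: "(h^^n) \<xi> \<in> X" using assms(2) fwd_orbit_mem[where h=h and n=n and \<xi>=\<xi>] by blast
  have b: "(h^^Suc n) \<xi> \<in> X" using assms(2) fwd_orbit_mem[where h=h and n="Suc n" and \<xi>=\<xi>] by blast
  then have "h ((h^^n) \<xi>) \<in> X" by simp
  then show ?case using conj[OF a] Suc by simp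
qed

lemma img_sub:
  assumes "\<xi> \<in> X" "fwd_orbit h \<xi> \<subseteq> X"
  shows "F ` omega_limit h X \<xi> \<subseteq> omega_limit G UNIV (F \<xi>)"
proof
  fix z assume "z \<in> F ` omega_limit h X \<xi>"
  then obtain x where x: "z = F x" "x \<in> omega_limit h X \<xi>" by blast
  then obtain k where k: "x \<in> X" "filterlim k at_top sequentially" "(\<lambda>j. (h ^^ k j) \<xi>) \<longlonglongrightarrow> x"
    by (auto simp: omega_limit_def)
  have inX: "(h ^^ k j) \<xi> \<in> X" for j using assms(2) fwd_orbit_mem[where h=h and n="k j" and \<xi>=\<xi>] by blast
  have "(\<lambda>j. F ((h ^^ k j) \<xi>)) \<longlonglongrightarrow> F x"
    by (rule continuous_on_tendsto_compose[OF F_cont k(3) k(1)]) (simp add: inX)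
  then have "(\<lambda>j. (G ^^ k j) (F \<xi>)) \<longlonglongrightarrow> F x" by (simp add: orbit_conj[OF assms])
  then show "z \<in> omega_limit G UNIV (F \<xi>)" using k(2) x(1) by (auto simp: omega_limit_def)
qed

lemma img_eq:
  assumes "\<xi> \<in> X" "precompact_in X (fwd_orbit h \<xi>)"
  shows "F ` omega_limit h X \<xi> = omega_limit G UNIV (F \<xi>)"
proof
  have sub: "fwd_orbit h \<xi> \<subseteq> X" and cK: "compact (X \<inter> closure (fwd_orbit h \<xi>))"
    using assms(2) by (auto simp: precompact_in_def)
  show "F ` omega_limit h X \<xi> \<subseteq> omega_limit G UNIV (F \<xi>)" by (rule img_sub[OF assms(1) sub])
  show "omega_limit G UNIV (F \<xi>) \<subseteq> F ` omega_limit h X \<xi>"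
  proof
    fix z assume "z \<in> omega_limit G UNIV (F \<xi>)"
    then obtain k where k: "filterlim k at_top sequentially" "(\<lambda>j. (G ^^ k j) (F \<xi>)) \<longlonglongrightarrow> z"
      by (auto simp: omega_limit_def)
    let ?K = "X \<inter> closure (fwd_orbit h \<xi>)"
    have inK: "(h ^^ k j) \<xi> \<in> ?K" for j
      using sub fwd_orbit_mem[where h=h and n="k j" and \<xi>=\<xi>] closure_subset by blast
    have "\<exists>l\<in>?K. \<exists>r. strict_mono r \<and> ((\<lambda>j. (h ^^ k j) \<xi>) \<circ> r) \<longlonglongrightarrow> l"
      using cK[unfolded compact_eq_seq_compact_metric seq_compact_def, rule_format, OF inK] .
    then obtain l r where lr: "l \<in> ?K" "strict_mono r" "((\<lambda>j. (h ^^ k j) \<xi>) \<circ> r) \<longlonglongrightarrow> l"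
      by blast
    have fl: "filterlim (\<lambda>j. k (r j)) at_top sequentially"
      by (rule filterlim_compose[OF k(1) filterlim_subseq[OF lr(2)]])
    have lim1: "(\<lambda>j. (h ^^ k (r j)) \<xi>) \<longlonglongrightarrow> l" using lr(3) by (simp add: o_def)
    have "l \<in> omega_limit h X \<xi>" using fl lim1 lr(1) by (auto simp: omega_limit_def)
    have inX: "(h ^^ k (r j)) \<xi> \<in> X" for j using inK by blast
    have "(\<lambda>j. F ((h ^^ k (r j)) \<xi>)) \<longlonglongrightarrow> F l"
      by (rule continuous_on_tendsto_compose[OF F_cont lim1]) (use lr(1) inX in auto)
    then have A: "(\<lambda>j. (G ^^ k (r j)) (F \<xi>)) \<longlonglongrightarrow> F l" by (simp add: orbit_conj[OF assms(1) sub])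
    have B: "(\<lambda>j. (G ^^ k (r j)) (F \<xi>)) \<longlonglongrightarrow> z"
      using LIMSEQ_subseq_LIMSEQ[OF k(2) lr(2)] by (simp add: o_def)
    have "z = F l" using LIMSEQ_unique[OF B A] .
    then show "z \<in> F ` omega_limit h X \<xi>" using \<open>l \<in> omega_limit h X \<xi>\<close> by blast
  qed
qed

lemma nice:
  assumes T4: "\<forall>\<Omega>\<in>omega_sets h X. \<exists>\<xi>\<in>dom_attr h X \<Omega>. precompact_in X (fwd_orbit h \<xi>)"
    and \<Omega>: "\<Omega> \<in> omega_sets h X"
  shows "\<Omega> \<noteq> {} \<and> \<Omega> \<subseteq> X \<and> F ` \<Omega> \<in> omega_sets G UNIV \<and>
    (\<forall>x\<in>\<Omega>. h x \<in> \<Omega> \<and> inv h x \<in> \<Omega> \<and> precompact_in X (fwd_orbit h x) \<and> omega_limit h X x = \<Omega>)"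
proof -
  obtain \<xi>0 where \<xi>0: "\<xi>0 \<in> X" "omega_limit h X \<xi>0 = \<Omega>" "precompact_in X (fwd_orbit h \<xi>0)"
    using T4 \<Omega> by (auto simp: dom_attr_def)
  let ?O = "fwd_orbit h \<xi>0"
  let ?K = "X \<inter> closure ?O"
  have sub: "?O \<subseteq> X" and cK: "compact ?K" using \<xi>0(3) by (auto simp: precompact_in_def)
  have clK: "closed ?K" using cK by (rule compact_imp_closed)
  have OK: "?O \<subseteq> ?K" using sub closure_subset by blast
  have \<Omega>X: "\<Omega> \<subseteq> X" using \<xi>0(2) by (auto simp: omega_limit_def)
  have \<Omega>K: "\<Omega> \<subseteq> ?K" using \<Omega>X om_sub_closure[of h X \<xi>0] \<xi>0(2) by blast
  have inK: "(h ^^ n) \<xi>0 \<in> ?K" for n using OK fwd_orbit_mem[where h=h and n=n and \<xi>=\<xi>0] by blast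
  have ne: "\<Omega> \<noteq> {}"
  proof -
    have "\<exists>l\<in>?K. \<exists>r. strict_mono r \<and> ((\<lambda>n. (h ^^ n) \<xi>0) \<circ> r) \<longlonglongrightarrow> l"
      using cK[unfolded compact_eq_seq_compact_metric seq_compact_def, rule_format, OF inK] .
    then obtain l r where lr: "l \<in> ?K" "strict_mono r" "((\<lambda>n. (h ^^ n) \<xi>0) \<circ> r) \<longlonglongrightarrow> l"
      by blast
    have "l \<in> omega_limit h X \<xi>0"
      using lr filterlim_subseq[OF lr(2)] by (auto simp: omega_limit_def o_def)
    then show ?thesis using \<xi>0(2) by blast
  qed
  have FO: "F ` \<Omega> = omega_limit G UNIV (F \<xi>0)" using img_eq[OF \<xi>0(1) \<xi>0(3)] \<xi>0(2) by simp
  have FOs: "F ` \<Omega> \<in> omega_sets G UNIV" using FO by (auto simp: omega_sets_def)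
  have hinv: "h x \<in> \<Omega>" if xO: "x \<in> \<Omega>" for x
  proof -
    have "x \<in> omega_limit h X \<xi>0" using xO \<xi>0(2) by simp
    then obtain k where k: "filterlim k at_top sequentially" "(\<lambda>j. (h ^^ k j) \<xi>0) \<longlonglongrightarrow> x"
      unfolding omega_limit_def by blast
    have "(\<lambda>j. h ((h ^^ k j) \<xi>0)) \<longlonglongrightarrow> h x"
      by (rule continuous_on_tendsto_compose[OF h_cont k(2)]) auto
    then have L: "(\<lambda>j. (h ^^ Suc (k j)) \<xi>0) \<longlonglongrightarrow> h x" by simp
    have "h x \<in> ?K" using closed_sequentially[OF clK _ L] inK by blast
    then show ?thesis using L filterlim_Suc_comp[OF k(1)] \<xi>0(2) by (auto simp: omega_limit_def)
  qed
  have iinv: "inv h x \<in> \<Omega>" if xO: "x \<in> \<Omega>" for x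
  proof -
    have "x \<in> omega_limit h X \<xi>0" using xO \<xi>0(2) by simp
    then obtain k where k: "filterlim k at_top sequentially" "(\<lambda>j. (h ^^ k j) \<xi>0) \<longlonglongrightarrow> x"
      unfolding omega_limit_def by blast
    have "(\<lambda>j. inv h ((h ^^ k j) \<xi>0)) \<longlonglongrightarrow> inv h x"
      by (rule continuous_on_tendsto_compose[OF hi_cont k(2)]) auto
    moreover have "eventually (\<lambda>j. inv h ((h ^^ k j) \<xi>0) = (h ^^ (k j - 1)) \<xi>0) sequentially"
    proof -
      have "eventually (\<lambda>j. 1 \<le> k j) sequentially" using k(1) by (simp add: filterlim_at_top)
      then show ?thesis
      proof (rule eventually_mono)
        fix j assume "1 \<le> k j"
        then have "k j = Suc (k j - 1)" by simp
        then have "(h ^^ k j) \<xi>0 = h ((h ^^ (k j - 1)) \<xi>0)" by (metis funpow.simps(2) o_apply)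
        then show "inv h ((h ^^ k j) \<xi>0) = (h ^^ (k j - 1)) \<xi>0"
          using h_bij by (simp add: bij_is_inj)
      qed
    qed
    ultimately have L: "(\<lambda>j. (h ^^ (k j - 1)) \<xi>0) \<longlonglongrightarrow> inv h x" by (rule Lim_transform_eventually)
    have "inv h x \<in> ?K" using closed_sequentially[OF clK _ L] inK by blast
    then show ?thesis using L filterlim_minus1[OF k(1)] \<xi>0(2) by (auto simp: omega_limit_def)
  qed
  have pc: "precompact_in X (fwd_orbit h x)" if "x \<in> \<Omega>" for x
  proof -
    have s: "fwd_orbit h x \<subseteq> \<Omega>" by (rule fwd_orbit_sub[OF that hinv])
    then have "closure (fwd_orbit h x) \<subseteq> ?K" using \<Omega>K clK by (metis closure_minimal order_trans)
    then have eq: "X \<inter> closure (fwd_orbit h x) = ?K \<inter> closure (fwd_orbit h x)" by blast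
    have "compact (X \<inter> closure (fwd_orbit h x))" unfolding eq
      by (rule compact_Int_closed[OF cK]) simp
    then show ?thesis using s \<Omega>X by (auto simp: precompact_in_def)
  qed
  have om: "omega_limit h X x = \<Omega>" if "x \<in> \<Omega>" for x
  proof -
    have xX: "x \<in> X" using that \<Omega>X by blast
    have "F x \<in> omega_limit G UNIV (F \<xi>0)" using FO that by blast
    then have "omega_limit G UNIV (F x) = F ` \<Omega>" using basin_stable[OF G_basins] FO by simp
    then have "F ` omega_limit h X x = F ` \<Omega>" using img_eq[OF xX pc[OF that]] by simp
    moreover have "omega_limit h X x \<subseteq> X" by (auto simp: omega_limit_def)
    ultimately show ?thesis using inj_on_image_eq_iff[OF F_inj _ \<Omega>X] by blast
  qed
  show ?thesis using ne \<Omega>X FOs hinv iinv pc om by blast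
qed

lemma D1:
  assumes T4: "\<forall>\<Omega>\<in>omega_sets h X. \<exists>\<xi>\<in>dom_attr h X \<Omega>. precompact_in X (fwd_orbit h \<xi>)"
    and "\<xi> \<in> X" "fwd_orbit h \<xi> \<subseteq> X"
  shows "omega_limit G UNIV (F \<xi>) = F ` omega_limit h X \<xi>"
proof -
  let ?O = "omega_limit h X \<xi>"
  have "?O \<in> omega_sets h X" using assms(2) by (auto simp: omega_sets_def)
  note N = nice[OF T4 this]
  then obtain x where x: "x \<in> ?O" by blast
  have xX: "x \<in> X" using x by (auto simp: omega_limit_def)
  have "F x \<in> omega_limit G UNIV (F \<xi>)" using img_sub[OF assms(2,3)] x by blast
  then have "omega_limit G UNIV (F x) = omega_limit G UNIV (F \<xi>)" by (rule basin_stable[OF G_basins])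
  moreover have "omega_limit G UNIV (F x) = F ` ?O"
    using img_eq[OF xX] N x by simp
  ultimately show ?thesis by simp
qed

lemma D2:
  assumes T4: "\<forall>\<Omega>\<in>omega_sets h X. \<exists>\<xi>\<in>dom_attr h X \<Omega>. precompact_in X (fwd_orbit h \<xi>)"
    and inv: "\<forall>\<xi>\<in>X. fwd_orbit h \<xi> \<subseteq> X"
    and \<Omega>: "\<Omega> \<in> omega_sets h X"
  shows "closedin (top_of_set X) (dom_attr h X \<Omega>)"
proof -
  note N = nice[OF T4 \<Omega>]
  have eq: "dom_attr h X \<Omega> = X \<inter> F -` dom_attr G UNIV (F ` \<Omega>)"
  proof (intro set_eqI iffI)
    fix \<xi> assume "\<xi> \<in> dom_attr h X \<Omega>"
    then have "\<xi> \<in> X" "omega_limit h X \<xi> = \<Omega>" by (auto simp: dom_attr_def)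
    then show "\<xi> \<in> X \<inter> F -` dom_attr G UNIV (F ` \<Omega>)"
      using D1[OF T4 _ ] inv by (auto simp: dom_attr_def)
  next
    fix \<xi> assume a: "\<xi> \<in> X \<inter> F -` dom_attr G UNIV (F ` \<Omega>)"
    then have "\<xi> \<in> X" "omega_limit G UNIV (F \<xi>) = F ` \<Omega>" by (auto simp: dom_attr_def)
    then have "F ` omega_limit h X \<xi> = F ` \<Omega>" using D1[OF T4] inv by auto
    moreover have "omega_limit h X \<xi> \<subseteq> X" by (auto simp: omega_limit_def)
    ultimately have "omega_limit h X \<xi> = \<Omega>" using inj_on_image_eq_iff[OF F_inj] N by blast
    then show "\<xi> \<in> dom_attr h X \<Omega>" using \<open>\<xi> \<in> X\<close> by (auto simp: dom_attr_def)
  qed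
  have "closed (dom_attr G UNIV (F ` \<Omega>))" using G_basins N by (auto simp: closed_basins_def)
  then show ?thesis unfolding eq by (rule continuous_closedin_preimage[OF F_cont])
qed

end



lemma C1:
  assumes S1: "sys h1 X G1 F" and S2: "sys h2 X G2 F" and e2: "h2 = inv h1" and e1: "h1 = inv h2"
    and T1: "\<forall>\<Omega>\<in>omega_sets h1 X. \<exists>\<xi>\<in>dom_attr h1 X \<Omega>. precompact_in X (fwd_orbit h1 \<xi>)"
    and T2: "\<forall>\<Omega>\<in>omega_sets h2 X. \<exists>\<xi>\<in>dom_attr h2 X \<Omega>. precompact_in X (fwd_orbit h2 \<xi>)"
    and \<Omega>: "\<Omega> \<in> omega_sets h1 X" and x: "x \<in> \<Omega>"
  shows "omega_limit h2 X x = \<Omega>"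
proof -
  note N1 = sys.nice[OF S1 T1 \<Omega>]
  obtain \<xi>0 where \<xi>0: "\<Omega> = omega_limit h1 X \<xi>0" using \<Omega> by (auto simp: omega_sets_def)
  have xX: "x \<in> X" using N1 x by blast
  have "fwd_orbit h2 x \<subseteq> \<Omega>"
    by (rule fwd_orbit_sub[OF x]) (use N1 e2 in blast)
  then have sub: "omega_limit h2 X x \<subseteq> \<Omega>" using om_sub_om \<xi>0 by metis
  have \<Gamma>: "omega_limit h2 X x \<in> omega_sets h2 X" using xX by (auto simp: omega_sets_def)
  note N2 = sys.nice[OF S2 T2 \<Gamma>]
  then obtain y where y: "y \<in> omega_limit h2 X x" by blast
  have "fwd_orbit h1 y \<subseteq> omega_limit h2 X x"
    by (rule fwd_orbit_sub[OF y]) (use N2 e1 in blast)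
  then have "omega_limit h1 X y \<subseteq> omega_limit h2 X x" by (rule om_sub_om)
  moreover have "omega_limit h1 X y = \<Omega>" using N1 y sub by blast
  ultimately show ?thesis using sub by blast
qed

lemma alpha_eq: "alpha_limit f X = omega_limit (inv f) X"
  by (intro ext) (simp add: alpha_limit_def omega_limit_def)

lemma alpha_sets_eq: "alpha_sets f X = omega_sets (inv f) X"
  by (simp add: alpha_sets_def omega_sets_def alpha_eq)

lemma dom_rep_eq: "dom_rep f X = dom_attr (inv f) X"
  by (intro ext) (simp add: dom_rep_def dom_attr_def alpha_eq)

lemma bwd_orbit_eq: "bwd_orbit f = fwd_orbit (inv f)"
  by (intro ext) (simp add: bwd_orbit_def fwd_orbit_def)

lemma closed_basins_rev_eq: "closed_basins_rev f X = closed_basins (inv f) X"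
  by (simp add: closed_basins_rev_def closed_basins_def alpha_sets_eq dom_rep_eq)

theorem corollary18:
  fixes f :: "'m::metric_space \<Rightarrow> 'm" and X :: "'m set"
    and g :: "'z::metric_space \<Rightarrow> 'z" and F :: "'m \<Rightarrow> 'z"
  assumes sepM: "separable_space TYPE('m)"
    and f_bij: "bij f" and f_cont: "continuous_on UNIV f" and finv_cont: "continuous_on UNIV (inv f)"
    and X_inv: "f ` X \<subseteq> X" and X_pc: "path_connected X" and X_ne: "X \<noteq> {}"
    and sepZ: "separable_space TYPE('z)"
    and g_bij: "bij g" and g_cont: "continuous_on UNIV g" and ginv_cont: "continuous_on UNIV (inv g)"
    and F_cont: "continuous_on X F" and F_conj: "\<forall>x\<in>X. F (f x) = g (F x)"
    and g_basins: "closed_basins g UNIV" and ginv_basins: "closed_basins_rev g UNIV"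
    and T2: "\<forall>xi\<in>X. precompact_in X (fwd_orbit f xi) \<or> precompact_in X (bwd_orbit f xi)"
    and T3: "countable (omega_sets f X \<union> alpha_sets f X)"
    and T4a: "\<forall>\<Omega>\<in>omega_sets f X. \<exists>xi\<in>dom_attr f X \<Omega>. precompact_in X (fwd_orbit f xi)"
    and T4b: "\<forall>\<Gamma>\<in>alpha_sets f X. \<exists>xi\<in>dom_rep f X \<Gamma>. precompact_in X (bwd_orbit f xi)"
    and F_inj: "inj_on F X"
  shows "\<exists>S. omega_sets f X \<union> alpha_sets f X = {S}"
proof -
  have S1: "sys f X g F"
    by (unfold_locales) (use f_bij f_cont finv_cont F_cont F_inj F_conj g_basins in auto)
  have S2: "sys (inv f) X (inv g) F"
  proof (unfold_locales)
    show "bij (inv f)" using f_bij by (rule bij_imp_bij_inv)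
    show "continuous_on UNIV (inv f)" by (rule finv_cont)
    show "continuous_on UNIV (inv (inv f))" using f_cont f_bij by (simp add: inv_inv_eq)
    show "continuous_on X F" by (rule F_cont)
    show "inj_on F X" by (rule F_inj)
    show "closed_basins (inv g) UNIV" using ginv_basins by (simp add: closed_basins_rev_eq)
    fix x assume "x \<in> X" "inv f x \<in> X"
    then have "F (f (inv f x)) = g (F (inv f x))" using F_conj by blast
    then have "F x = g (F (inv f x))" using f_bij by (simp add: bij_is_surj surj_f_inv_f)
    then show "F (inv f x) = inv g (F x)" using g_bij by (simp add: bij_is_inj)
  qed
  have T4b': "\<forall>\<Omega>\<in>omega_sets (inv f) X. \<exists>\<xi>\<in>dom_attr (inv f) X \<Omega>. precompact_in X (fwd_orbit (inv f) \<xi>)"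
    using T4b by (simp add: alpha_sets_eq dom_rep_eq bwd_orbit_eq)
  have ii: "inv (inv f) = f" using f_bij by (rule inv_inv_eq)
  have iii: "inv f = inv (inv (inv f))" using ii by simp
  have S1': "sys (inv (inv f)) X g F" using S1 ii by simp
  have T4a': "\<forall>\<Omega>\<in>omega_sets (inv (inv f)) X. \<exists>\<xi>\<in>dom_attr (inv (inv f)) X \<Omega>. precompact_in X (fwd_orbit (inv (inv f)) \<xi>)"
    using T4a ii by simp
  let ?W = "omega_sets f X"
  have AW: "alpha_sets f X = ?W"
  proof
    show "?W \<subseteq> alpha_sets f X"
    proof
      fix \<Omega> assume \<Omega>: "\<Omega> \<in> ?W"
      note N = sys.nice[OF S1 T4a \<Omega>]
      then obtain x where x: "x \<in> \<Omega>" "x \<in> X" by blast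
      have "omega_limit (inv f) X x = \<Omega>" by (rule C1[OF S1 S2 refl ii[symmetric] T4a T4b' \<Omega> x(1)])
      then show "\<Omega> \<in> alpha_sets f X" using x(2) by (auto simp: alpha_sets_eq omega_sets_def)
    qed
  next
    show "alpha_sets f X \<subseteq> ?W"
    proof
      fix \<Omega> assume "\<Omega> \<in> alpha_sets f X"
      then have \<Omega>: "\<Omega> \<in> omega_sets (inv f) X" by (simp add: alpha_sets_eq)
      note N = sys.nice[OF S2 T4b' \<Omega>]
      then obtain x where x: "x \<in> \<Omega>" "x \<in> X" by blast
      have "omega_limit (inv (inv f)) X x = \<Omega>" by (rule C1[OF S2 S1' refl iii T4b' T4a' \<Omega> x(1)])
      then show "\<Omega> \<in> ?W" using x(2) ii by (auto simp: omega_sets_def)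
    qed
  qed
  have fwdX: "\<forall>\<xi>\<in>X. fwd_orbit f \<xi> \<subseteq> X"
  proof
    fix \<xi> assume "\<xi> \<in> X"
    then show "fwd_orbit f \<xi> \<subseteq> X" by (rule fwd_orbit_sub) (use X_inv in blast)
  qed
  have cW: "countable ?W" using T3 by (rule countable_subset[rotated]) blast
  have Wne: "?W \<noteq> {}" using X_ne by (auto simp: omega_sets_def)
  have single: "\<Omega>1 = \<Omega>2" if o1: "\<Omega>1 \<in> ?W" and o2: "\<Omega>2 \<in> ?W" for \<Omega>1 \<Omega>2
  proof (rule ccontr)
    assume ne: "\<Omega>1 \<noteq> \<Omega>2"
    note N1 = sys.nice[OF S1 T4a o1] and N2 = sys.nice[OF S1 T4a o2]
    obtain x1 where x1: "x1 \<in> X" "omega_limit f X x1 = \<Omega>1" using N1 by blast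
    obtain x2 where x2: "x2 \<in> X" "omega_limit f X x2 = \<Omega>2" using N2 by blast
    obtain \<gamma> where \<gamma>: "path \<gamma>" "path_image \<gamma> \<subseteq> X" "pathstart \<gamma> = x1" "pathfinish \<gamma> = x2"
      using X_pc x1(1) x2(1) unfolding path_connected_def by blast
    have gcont: "continuous_on {0..1} \<gamma>" using \<gamma>(1) by (simp add: path_def)
    have gX: "\<gamma> t \<in> X" if "t \<in> {0..1}" for t using \<gamma>(2) that by (auto simp: path_image_def)
    define P where "P \<Omega> = {0..1} \<inter> \<gamma> -` dom_attr f X \<Omega>" for \<Omega>
    define U where "U = P ` ?W - {{}}"
    have "U = {{0..1::real}}"
    proof (rule real_Sierpinski_lemma)
      show "(0::real) \<le> 1" by simp
      show "countable U" unfolding U_def using cW by simp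
      show "pairwise disjnt U"
        unfolding pairwise_def disjnt_def U_def P_def
        by (auto simp: dom_attr_def)
      fix C assume "C \<in> U"
      then obtain \<Omega> where \<Omega>: "\<Omega> \<in> ?W" "C = P \<Omega>" "C \<noteq> {}" unfolding U_def by blast
      have cl: "closedin (top_of_set X) (dom_attr f X \<Omega>)" by (rule sys.D2[OF S1 T4a fwdX \<Omega>(1)])
      have fs: "\<gamma> \<in> {0..1} \<rightarrow> X" using gX by auto
      have "closedin (top_of_set {0..1}) ({0..1} \<inter> \<gamma> -` dom_attr f X \<Omega>)"
        by (rule continuous_closedin_preimage_gen[OF gcont fs cl])
      then have "closed C" unfolding \<Omega>(2) P_def using closedin_closed_trans by blast
      then show "closed C \<and> C \<noteq> {}" using \<Omega>(3) by blast
    next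
      show "\<Union>U = {0..1}"
      proof
        show "\<Union>U \<subseteq> {0..1}" unfolding U_def P_def by blast
        show "{0..1} \<subseteq> \<Union>U"
        proof
          fix t :: real assume t: "t \<in> {0..1}"
          let ?O = "omega_limit f X (\<gamma> t)"
          have "?O \<in> ?W" using gX[OF t] by (auto simp: omega_sets_def)
          moreover have "t \<in> P ?O" using t gX[OF t] by (auto simp: P_def dom_attr_def)
          ultimately show "t \<in> \<Union>U" unfolding U_def by blast
        qed
      qed
    qed
    moreover have "0 \<in> P \<Omega>1" using \<gamma>(3) x1 by (auto simp: P_def dom_attr_def pathstart_def)
    then have "P \<Omega>1 \<in> U" using o1 unfolding U_def by blast
    ultimately have "P \<Omega>1 = {0..1}" by blast
    then have "1 \<in> P \<Omega>1" by simp
    then have "omega_limit f X x2 = \<Omega>1" using \<gamma>(4) by (auto simp: P_def dom_attr_def pathfinish_def)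
    then show False using x2(2) ne by simp
  qed
  obtain S where "S \<in> ?W" using Wne by blast
  then have "?W = {S}" using single by blast
  then show ?thesis using AW by auto
qed

end
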